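(* Let $\tau$ be an infinitesimal bending of an isometric immersion $f\colon M^n\to\mathbb{R}^{n+p}$, $p\ge 2$, satisfying condition $( * )$ with unit normal $\eta$ and $\xi\in\Gamma(R)$, and let $\bar L$ be the extended tensor defined below. Then for all $X\in\mathfrak{X}(M)$ and $\lambda\in\Gamma(f_*TM\oplus P)$, $$\langle f_*X+\tilde\nabla_X\lambda,\ LX+\tilde\nabla_X\bar L\lambda\rangle=\langle(\tilde\nabla_X\lambda)_R,\ (\tilde\nabla_X\bar L)\lambda\rangle,$$ where $(\tilde\nabla_X\bar L)\lambda=\tilde\nabla_X\bar L\lambda-\bar L\nabla'_X\lambda$ and $\nabla'$ is the connection induced on $f_*TM\oplus P$ (orthogonal projection of $\tilde\nabla$).
   Context: $\alpha$ is the second fundamental form of $f$, $N_fM$ its normal bundle, $\tilde\nabla$ the Euclidean connection. An infinitesimal bending is a smooth $\tau\colon M\to\mathbb{R}^{n+p}$ with $\langle f_*X,\tilde\nabla_X\tau\rangle=0$ for all tangent $X$. Set $LX=\tilde\nabla_X\tau$, $B(X,Y)=\tilde\nabla_X(LY)-L\nabla_XY$, and $\beta$ the normal component of $B$. Condition $( * )$: there are a unit $\eta\in\Gamma(N_fM)$ and $\xi\in\Gamma(R)$, where $N_fM=P\oplus R$ orthogonally with $P=\mathrm{span}\{\eta\}$, such that $\langle\beta(X,Y),\eta\rangle+\langle\alpha(X,Y),\xi\rangle=0$ for all $X,Y$. The tensor $\bar L\in\Gamma(\mathrm{Hom}(TM\oplus P,f^*T\mathbb{R}^{n+p}))$ is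 given by $\bar L(f_*X)=LX$ for tangent $X$ and $\bar L\eta=f_*Y+\xi$, where $Y\in\mathfrak{X}(M)$ is defined by $\langle Y,X\rangle+\langle LX,\eta\rangle=0$ for all $X$. $(\cdot)_R$ denotes orthogonal projection onto $R$. *)

theory Defs
  imports "HOL-Analysis.Analysis"
begin

text \<open>Local (coordinate) model: M is an open set U of real^'n (a chart), f an immersion
  into real^'m; the Riemannian metric of M is the one induced by f.
  Tangent vectors of M are coordinate vectors in real^'n.\<close>

definition df :: "('a::real_normed_vector \<Rightarrow> 'b::real_normed_vector) \<Rightarrow> 'a \<Rightarrow> 'a \<Rightarrow> 'b" where
  "df g x = frechet_derivative g (at x)"

fun dd :: "('a::real_normed_vector \<Rightarrow> 'b::real_normed_vector) \<Rightarrow> 'a list \<Rightarrow> 'a \<Rightarrow> 'b" where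
  "dd g [] = g"
| "dd g (v # vs) = (\<lambda>x. df (dd g vs) x v)"

definition smooth_on :: "'a::real_normed_vector set \<Rightarrow> ('a \<Rightarrow> 'b::real_normed_vector) \<Rightarrow> bool" where
  "smooth_on U g \<longleftrightarrow> (\<forall>vs. (\<forall>x\<in>U. dd g vs differentiable (at x)) \<and> continuous_on U (dd g vs))"

definition isometric_immersion :: "(real^'n) set \<Rightarrow> (real^'n \<Rightarrow> real^'m) \<Rightarrow> bool" where
  "isometric_immersion U f \<longleftrightarrow> open U \<and> smooth_on U f \<and> (\<forall>x\<in>U. inj (df f x))"

definition vector_field :: "(real^'n) set \<Rightarrow> (real^'n \<Rightarrow> real^'n) \<Rightarrow> bool" where
  "vector_field U X \<longleftrightarrow> smooth_on U X"

definition proj :: "'a::real_inner set \<Rightarrow> 'a \<Rightarrow> 'a" where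
  "proj S u = (THE w. w \<in> S \<and> (\<forall>s\<in>S. inner (u - w) s = 0))"

definition tang :: "(real^'n \<Rightarrow> real^'m) \<Rightarrow> real^'n \<Rightarrow> (real^'m) set" where
  "tang f x = range (df f x)"

definition nor :: "(real^'n \<Rightarrow> real^'m) \<Rightarrow> real^'n \<Rightarrow> (real^'m) set" where
  "nor f x = {w. \<forall>v\<in>tang f x. inner w v = 0}"

text \<open>R = orthogonal complement of P = span eta in the normal space\<close>
definition Rsp :: "(real^'n \<Rightarrow> real^'m) \<Rightarrow> (real^'n \<Rightarrow> real^'m) \<Rightarrow> real^'n \<Rightarrow> (real^'m) set" where
  "Rsp f \<eta> x = {w \<in> nor f x. inner w (\<eta> x) = 0}"

definition TP :: "(real^'n \<Rightarrow> real^'m) \<Rightarrow> (real^'n \<Rightarrow> real^'m) \<Rightarrow> real^'n \<Rightarrow> (real^'m) set" where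
  "TP f \<eta> x = {df f x v + c *\<^sub>R \<eta> x | v c. True}"

definition push :: "(real^'n \<Rightarrow> real^'m) \<Rightarrow> (real^'n \<Rightarrow> real^'n) \<Rightarrow> real^'n \<Rightarrow> real^'m" where
  "push f X x = df f x (X x)"

definition nablat :: "(real^'n \<Rightarrow> real^'n) \<Rightarrow> (real^'n \<Rightarrow> real^'m) \<Rightarrow> real^'n \<Rightarrow> real^'m" where
  "nablat X V x = df V x (X x)"

text \<open>Levi-Civita connection of the induced metric (Gauss formula):
  f_* (nabla_X Y) = tangent part of tilde-nabla_X f_* Y\<close>
definition lc :: "(real^'n \<Rightarrow> real^'m) \<Rightarrow> (real^'n \<Rightarrow> real^'n) \<Rightarrow> (real^'n \<Rightarrow> real^'n) \<Rightarrow> real^'n \<Rightarrow> real^'n" where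
  "lc f X Y x = (THE w. df f x w = proj (tang f x) (nablat X (push f Y) x))"

definition sff :: "(real^'n \<Rightarrow> real^'m) \<Rightarrow> (real^'n \<Rightarrow> real^'n) \<Rightarrow> (real^'n \<Rightarrow> real^'n) \<Rightarrow> real^'n \<Rightarrow> real^'m" where
  "sff f X Y x = proj (nor f x) (nablat X (push f Y) x)"

definition inf_bending :: "(real^'n) set \<Rightarrow> (real^'n \<Rightarrow> real^'m) \<Rightarrow> (real^'n \<Rightarrow> real^'m) \<Rightarrow> bool" where
  "inf_bending U f \<tau> \<longleftrightarrow> smooth_on U \<tau> \<and>
     (\<forall>x\<in>U. \<forall>v. inner (df f x v) (df \<tau> x v) = 0)"

definition Lop :: "(real^'n \<Rightarrow> real^'m) \<Rightarrow> (real^'n \<Rightarrow> real^'n) \<Rightarrow> real^'n \<Rightarrow> real^'m" where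
  "Lop \<tau> X x = nablat X \<tau> x"

definition Bt :: "(real^'n \<Rightarrow> real^'m) \<Rightarrow> (real^'n \<Rightarrow> real^'m) \<Rightarrow> (real^'n \<Rightarrow> real^'n) \<Rightarrow> (real^'n \<Rightarrow> real^'n) \<Rightarrow> real^'n \<Rightarrow> real^'m" where
  "Bt f \<tau> X Y x = nablat X (Lop \<tau> Y) x - Lop \<tau> (lc f X Y) x"

definition beta :: "(real^'n \<Rightarrow> real^'m) \<Rightarrow> (real^'n \<Rightarrow> real^'m) \<Rightarrow> (real^'n \<Rightarrow> real^'n) \<Rightarrow> (real^'n \<Rightarrow> real^'n) \<Rightarrow> real^'n \<Rightarrow> real^'m" where
  "beta f \<tau> X Y x = proj (nor f x) (Bt f \<tau> X Y x)"

definition cond_star :: "(real^'n) set \<Rightarrow> (real^'n \<Rightarrow> real^'m) \<Rightarrow> (real^'n \<Rightarrow> real^'m) \<Rightarrow> (real^'n \<Rightarrow> real^'m) \<Rightarrow> (real^'n \<Rightarrow> real^'m) \<Rightarrow> bool" where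
  "cond_star U f \<tau> \<eta> \<xi> \<longleftrightarrow>
     smooth_on U \<eta> \<and> smooth_on U \<xi> \<and>
     (\<forall>x\<in>U. \<eta> x \<in> nor f x \<and> norm (\<eta> x) = 1 \<and> \<xi> x \<in> Rsp f \<eta> x) \<and>
     (\<forall>X Y. vector_field U X \<longrightarrow> vector_field U Y \<longrightarrow>
        (\<forall>x\<in>U. inner (beta f \<tau> X Y x) (\<eta> x) + inner (sff f X Y x) (\<xi> x) = 0))"

definition Yfld :: "(real^'n \<Rightarrow> real^'m) \<Rightarrow> (real^'n \<Rightarrow> real^'m) \<Rightarrow> (real^'n \<Rightarrow> real^'m) \<Rightarrow> real^'n \<Rightarrow> real^'n" where
  "Yfld f \<tau> \<eta> x = (THE y. \<forall>v. inner (df f x y) (df f x v) + inner (df \<tau> x v) (\<eta> x) = 0)"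

text \<open>extended tensor Lbar at x applied to u in f_*T_xM + P_x:
  Lbar(f_* v) = L v, Lbar eta = f_* Y + xi\<close>
definition Lbar :: "(real^'n \<Rightarrow> real^'m) \<Rightarrow> (real^'n \<Rightarrow> real^'m) \<Rightarrow> (real^'n \<Rightarrow> real^'m) \<Rightarrow> (real^'n \<Rightarrow> real^'m) \<Rightarrow> real^'n \<Rightarrow> real^'m \<Rightarrow> real^'m" where
  "Lbar f \<tau> \<eta> \<xi> x u =
     df \<tau> x (THE v. df f x v = proj (tang f x) u)
     + inner u (\<eta> x) *\<^sub>R (df f x (Yfld f \<tau> \<eta> x) + \<xi> x)"

end

theory Submission
  imports Defs
begin
lemma dd_append: "dd (dd g vs) ws = dd g (ws @ vs)"
  by (induction ws) auto

lemma smooth_dd: "smooth_on U g \<Longrightarrow> smooth_on U (dd g vs)"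
  unfolding smooth_on_def by (simp add: dd_append)

lemma smooth_hasd:
  assumes "smooth_on U g" "x \<in> U"
  shows "(dd g vs has_derivative df (dd g vs) x) (at x)"
  using assms unfolding smooth_on_def df_def by (simp add: frechet_derivative_works)

lemma smooth_hasd0:
  assumes "smooth_on U g" "x \<in> U"
  shows "(g has_derivative df g x) (at x)"
  using smooth_hasd[OF assms, of "[]"] by simp

lemma smooth_lin: "smooth_on U g \<Longrightarrow> x \<in> U \<Longrightarrow> linear (df g x)"
  using smooth_hasd0 has_derivative_linear by blast

lemma deriv_line:
  fixes g :: "'a::real_normed_vector \<Rightarrow> 'b::real_inner"
  assumes "(g has_derivative g') (at (a + s *\<^sub>R p))"
  shows "((\<lambda>s. inner w (g (a + s *\<^sub>R p))) has_real_derivative inner w (g' p)) (at s)"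
proof -
  have l: "linear g'" using assms has_derivative_linear by blast
  have d1: "((\<lambda>s. a + s *\<^sub>R p) has_derivative (\<lambda>h. h *\<^sub>R p)) (at s)"
    by (auto intro!: derivative_eq_intros)
  have "((\<lambda>s. g (a + s *\<^sub>R p)) has_derivative (\<lambda>h. g' (h *\<^sub>R p))) (at s)"
    using has_derivative_compose[OF d1 assms] by simp
  then have "((\<lambda>s. inner w (g (a + s *\<^sub>R p))) has_derivative (\<lambda>h. inner w (g' (h *\<^sub>R p)))) (at s)"
    by (rule has_derivative_inner_right)
  moreover have "(\<lambda>h. inner w (g' (h *\<^sub>R p))) = (*) (inner w (g' p))"
    using l by (auto simp: linear_scale mult.commute)
  ultimately show ?thesis by (simp add: has_field_derivative_def)
qed

lemma mixed_mvt:
  fixes g :: "'a::real_normed_vector \<Rightarrow> 'b::real_inner"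
  assumes sm: "smooth_on U g"
    and sub: "\<And>\<sigma> \<tau>. 0 \<le> \<sigma> \<Longrightarrow> \<sigma> \<le> s \<Longrightarrow> 0 \<le> \<tau> \<Longrightarrow> \<tau> \<le> t \<Longrightarrow> x + \<sigma> *\<^sub>R p + \<tau> *\<^sub>R q \<in> U"
    and s: "0 < s" and t: "0 < t"
  shows "\<exists>\<sigma> \<tau>. 0 < \<sigma> \<and> \<sigma> < s \<and> 0 < \<tau> \<and> \<tau> < t \<and>
     inner w (g (x + s *\<^sub>R p + t *\<^sub>R q) - g (x + s *\<^sub>R p) - g (x + t *\<^sub>R q) + g x)
       = s * t * inner w (dd g [q,p] (x + \<sigma> *\<^sub>R p + \<tau> *\<^sub>R q))"
proof -
  define \<phi> where "\<phi> \<sigma> = inner w (g ((x + t *\<^sub>R q) + \<sigma> *\<^sub>R p)) - inner w (g (x + \<sigma> *\<^sub>R p))" for \<sigma>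
  have "\<exists>z. 0 < z \<and> z < s \<and> \<phi> s - \<phi> 0 = (s - 0) *
      (inner w (dd g [p] ((x + t *\<^sub>R q) + z *\<^sub>R p)) - inner w (dd g [p] (x + z *\<^sub>R p)))"
  proof (rule MVT2[OF s])
    fix \<sigma> assume a: "0 \<le> \<sigma>" "\<sigma> \<le> s"
    have u1: "(x + t *\<^sub>R q) + \<sigma> *\<^sub>R p \<in> U" using sub[OF a, of t] t by (simp add: algebra_simps)
    have u2: "x + \<sigma> *\<^sub>R p \<in> U" using sub[OF a, of 0] t by simp
    show "(\<phi> has_real_derivative (inner w (dd g [p] ((x + t *\<^sub>R q) + \<sigma> *\<^sub>R p)) - inner w (dd g [p] (x + \<sigma> *\<^sub>R p)))) (at \<sigma>)"
      unfolding \<phi>_def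
      using DERIV_diff[OF deriv_line[OF smooth_hasd0[OF sm u1], of w] deriv_line[OF smooth_hasd0[OF sm u2], of w]]
      by simp
  qed
  then obtain \<sigma>1 where s1: "0 < \<sigma>1" "\<sigma>1 < s" and e1: "\<phi> s - \<phi> 0 = s *
      (inner w (dd g [p] ((x + t *\<^sub>R q) + \<sigma>1 *\<^sub>R p)) - inner w (dd g [p] (x + \<sigma>1 *\<^sub>R p)))" by auto
  define \<psi> where "\<psi> \<tau> = inner w (dd g [p] ((x + \<sigma>1 *\<^sub>R p) + \<tau> *\<^sub>R q))" for \<tau>
  have "\<exists>z. 0 < z \<and> z < t \<and> \<psi> t - \<psi> 0 = (t - 0) * inner w (dd g [q,p] ((x + \<sigma>1 *\<^sub>R p) + z *\<^sub>R q))"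
  proof (rule MVT2[OF t])
    fix \<tau> assume a: "0 \<le> \<tau>" "\<tau> \<le> t"
    have u1: "(x + \<sigma>1 *\<^sub>R p) + \<tau> *\<^sub>R q \<in> U" using sub[of \<sigma>1 \<tau>] a s1 by simp
    show "(\<psi> has_real_derivative inner w (dd g [q,p] ((x + \<sigma>1 *\<^sub>R p) + \<tau> *\<^sub>R q))) (at \<tau>)"
      unfolding \<psi>_def using deriv_line[OF smooth_hasd[OF sm u1, of "[p]"], of w] by simp
  qed
  then obtain \<tau>1 where t1: "0 < \<tau>1" "\<tau>1 < t" and e2: "\<psi> t - \<psi> 0 = t * inner w (dd g [q,p] ((x + \<sigma>1 *\<^sub>R p) + \<tau>1 *\<^sub>R q))" by auto
  have "inner w (g (x + s *\<^sub>R p + t *\<^sub>R q) - g (x + s *\<^sub>R p) - g (x + t *\<^sub>R q) + g x) = \<phi> s - \<phi> 0"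
    unfolding \<phi>_def by (simp add: inner_diff_right inner_add_right algebra_simps)
  also have "\<dots> = s * (\<psi> t - \<psi> 0)" unfolding e1 \<psi>_def by (simp add: algebra_simps)
  also have "\<dots> = s * t * inner w (dd g [q,p] (x + \<sigma>1 *\<^sub>R p + \<tau>1 *\<^sub>R q))" using e2 by simp
  finally show ?thesis using s1 t1 by blast
qed

lemma cont_eps:
  fixes k :: "'a::real_normed_vector \<Rightarrow> real"
  assumes "isCont k x" "e > 0"
  shows "\<exists>d>0. \<forall>z. norm (z - x) < d \<longrightarrow> \<bar>k z - k x\<bar> < e"
proof -
  from assms obtain d where "d > 0" "\<forall>z. z \<noteq> x \<and> norm (z - x) < d \<longrightarrow> norm (k z - k x) < e"
    unfolding isCont_def LIM_eq by blast
  then show ?thesis using assms(2) by (metis abs_zero diff_self real_norm_def)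
qed

lemma schwarz:
  fixes g :: "'a::real_normed_vector \<Rightarrow> 'b::real_inner"
  assumes sm: "smooth_on U g" and U: "open U" and x: "x \<in> U"
  shows "dd g [p,q] x = dd g [q,p] x"
proof -
  have key: "inner w (dd g [q,p] x) = inner w (dd g [p,q] x)" for w
  proof (rule ccontr)
    define k where "k z = inner w (dd g [q,p] z)" for z
    define l where "l z = inner w (dd g [p,q] z)" for z
    assume ne: "inner w (dd g [q,p] x) \<noteq> inner w (dd g [p,q] x)"
    define e where "e = \<bar>k x - l x\<bar> / 3"
    have e: "e > 0" using ne unfolding e_def k_def l_def by simp
    have c0: "isCont (dd g [q,p]) x" "isCont (dd g [p,q]) x"
      using sm U x unfolding smooth_on_def
      by (auto simp: continuous_on_eq_continuous_at simp del: dd.simps)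
    have ck: "isCont k x" "isCont l x"
      unfolding k_def l_def using c0 by (auto intro: isCont_inner simp del: dd.simps)
    obtain d1 where d1: "d1 > 0" "\<forall>z. norm (z - x) < d1 \<longrightarrow> \<bar>k z - k x\<bar> < e" using cont_eps[OF ck(1) e] by blast
    obtain d2 where d2: "d2 > 0" "\<forall>z. norm (z - x) < d2 \<longrightarrow> \<bar>l z - l x\<bar> < e" using cont_eps[OF ck(2) e] by blast
    obtain d3 where d3: "d3 > 0" "ball x d3 \<subseteq> U" using U x open_contains_ball by blast
    define d where "d = min d1 (min d2 d3)"
    have d: "d > 0" "d \<le> d1" "d \<le> d2" "d \<le> d3" using d1 d2 d3 unfolding d_def by auto
    define s where "s = d / (2 * (norm p + norm q + 1))"
    have pq: "2 * (norm p + norm q + 1) > (0::real)" by (smt (verit) norm_ge_zero)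
    have s: "s > 0" using d pq unfolding s_def by (intro divide_pos_pos) auto
    have sb: "s * (norm p + norm q) < d"
    proof -
      have "s * (norm p + norm q) \<le> s * (norm p + norm q + 1)" using s by simp
      also have "\<dots> = d / 2" unfolding s_def using pq by (simp add: field_simps)
      finally show ?thesis using d by simp
    qed
    have near: "norm ((x + \<sigma> *\<^sub>R a + \<tau> *\<^sub>R b) - x) < d"
      if "0 \<le> \<sigma>" "\<sigma> \<le> s" "0 \<le> \<tau>" "\<tau> \<le> s" "norm a + norm b = norm p + norm q" for \<sigma> \<tau> a b
    proof -
      have eq: "(x + \<sigma> *\<^sub>R a + \<tau> *\<^sub>R b) - x = \<sigma> *\<^sub>R a + \<tau> *\<^sub>R b" by simp
      have "norm (\<sigma> *\<^sub>R a + \<tau> *\<^sub>R b) \<le> norm (\<sigma> *\<^sub>R a) + norm (\<tau> *\<^sub>R b)"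
        by (rule norm_triangle_ineq)
      also have "\<dots> = \<sigma> * norm a + \<tau> * norm b" using that(1,3) by simp
      also have "\<dots> \<le> s * norm a + s * norm b"
        using that by (intro add_mono mult_right_mono) auto
      also have "\<dots> = s * (norm p + norm q)" using that(5) by (simp add: distrib_left[symmetric])
      finally show ?thesis using sb eq by simp
    qed
    have inU: "x + \<sigma> *\<^sub>R a + \<tau> *\<^sub>R b \<in> U"
      if "0 \<le> \<sigma>" "\<sigma> \<le> s" "0 \<le> \<tau>" "\<tau> \<le> s" "norm a + norm b = norm p + norm q" for \<sigma> \<tau> a b
    proof -
      have "dist x (x + \<sigma> *\<^sub>R a + \<tau> *\<^sub>R b) < d3"
        using near[OF that] d by (simp add: dist_norm norm_minus_commute add.commute)
      then show ?thesis using d3(2) by auto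
    qed
    have inU1: "x + \<sigma> *\<^sub>R p + \<tau> *\<^sub>R q \<in> U" if "0 \<le> \<sigma>" "\<sigma> \<le> s" "0 \<le> \<tau>" "\<tau> \<le> s" for \<sigma> \<tau>
      using inU[OF that] by simp
    have inU2: "x + \<sigma> *\<^sub>R q + \<tau> *\<^sub>R p \<in> U" if "0 \<le> \<sigma>" "\<sigma> \<le> s" "0 \<le> \<tau>" "\<tau> \<le> s" for \<sigma> \<tau>
      using inU[OF that] by (simp add: add.commute)
    obtain \<sigma>1 \<tau>1 where m1: "0 < \<sigma>1" "\<sigma>1 < s" "0 < \<tau>1" "\<tau>1 < s"
      "inner w (g (x + s *\<^sub>R p + s *\<^sub>R q) - g (x + s *\<^sub>R p) - g (x + s *\<^sub>R q) + g x)
       = s * s * inner w (dd g [q,p] (x + \<sigma>1 *\<^sub>R p + \<tau>1 *\<^sub>R q))"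
      using mixed_mvt[OF sm inU1 s s, of w] by blast
    obtain \<sigma>2 \<tau>2 where m2: "0 < \<sigma>2" "\<sigma>2 < s" "0 < \<tau>2" "\<tau>2 < s"
      "inner w (g (x + s *\<^sub>R q + s *\<^sub>R p) - g (x + s *\<^sub>R q) - g (x + s *\<^sub>R p) + g x)
       = s * s * inner w (dd g [p,q] (x + \<sigma>2 *\<^sub>R q + \<tau>2 *\<^sub>R p))"
      using mixed_mvt[OF sm inU2 s s, of w] by blast
    have "g (x + s *\<^sub>R q + s *\<^sub>R p) - g (x + s *\<^sub>R q) - g (x + s *\<^sub>R p) + g x
        = g (x + s *\<^sub>R p + s *\<^sub>R q) - g (x + s *\<^sub>R p) - g (x + s *\<^sub>R q) + g x"
      by (simp add: add_ac)
    then have "s * s * k (x + \<sigma>1 *\<^sub>R p + \<tau>1 *\<^sub>R q) = s * s * l (x + \<sigma>2 *\<^sub>R q + \<tau>2 *\<^sub>R p)"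
      unfolding k_def l_def by (metis m1(5) m2(5))
    then have "k (x + \<sigma>1 *\<^sub>R p + \<tau>1 *\<^sub>R q) = l (x + \<sigma>2 *\<^sub>R q + \<tau>2 *\<^sub>R p)"
      using s by simp
    moreover have "\<bar>k (x + \<sigma>1 *\<^sub>R p + \<tau>1 *\<^sub>R q) - k x\<bar> < e"
      using d1(2) near[of \<sigma>1 \<tau>1 p q] m1 d(2) by simp
    moreover have "\<bar>l (x + \<sigma>2 *\<^sub>R q + \<tau>2 *\<^sub>R p) - l x\<bar> < e"
      using d2(2) near[of \<sigma>2 \<tau>2 q p] m2 d(3) by (simp add: add.commute)
    ultimately have "\<bar>k x - l x\<bar> < 2 * e" by linarith
    moreover have "\<bar>k x - l x\<bar> = 3 * e" unfolding e_def by simp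
    ultimately show False using e by linarith
  qed
  have "inner (dd g [q,p] x - dd g [p,q] x) (dd g [q,p] x - dd g [p,q] x) = 0"
    using key[of "dd g [q,p] x - dd g [p,q] x"] by (simp add: inner_diff_right)
  then show ?thesis by simp
qed

lemma differentiable_prod':
  fixes f :: "'i \<Rightarrow> 'a::real_normed_vector \<Rightarrow> real"
  assumes "\<And>i. i \<in> I \<Longrightarrow> f i differentiable (at x)"
  shows "(\<lambda>z. \<Prod>i\<in>I. f i z) differentiable (at x)"
proof -
  from assms obtain f' where "\<And>i. i \<in> I \<Longrightarrow> (f i has_derivative f' i) (at x)"
    unfolding differentiable_def by metis
  then show ?thesis unfolding differentiable_def by (blast intro: has_derivative_prod)
qed

lemma det_diff:
  fixes M :: "'a::real_normed_vector \<Rightarrow> real^'k^'k"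
  assumes "\<And>i j. (\<lambda>z. M z $ i $ j) differentiable (at x)"
  shows "(\<lambda>z. det (M z)) differentiable (at x)"
  unfolding det_def
  by (intro differentiable_sum ballI differentiable_mult differentiable_const differentiable_prod' assms) simp

lemma dd2_swap:
  fixes g :: "'a::real_normed_vector \<Rightarrow> 'b::real_inner"
  assumes "smooth_on U g" "open U" "x \<in> U"
  shows "dd g [p,b] x = df (dd g [p]) x b"
  using schwarz[OF assms, of p b] by simp

lemma dd2_lin:
  fixes g :: "'a::real_normed_vector \<Rightarrow> 'b::real_inner"
  assumes "smooth_on U g" "open U" "x \<in> U"
  shows "linear (\<lambda>b. dd g [p,b] x)"
proof -
  have "linear (df (dd g [p]) x)" using smooth_lin[OF smooth_dd[OF assms(1)] assms(3)] .
  then show ?thesis using dd2_swap[OF assms] by presburger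
qed

lemma lin_expand:
  fixes F :: "'a::euclidean_space \<Rightarrow> 'b::real_vector"
  shows "linear F \<Longrightarrow> F (\<Sum>i\<in>Basis. c i *\<^sub>R i) = (\<Sum>i\<in>Basis. c i *\<^sub>R F i)"
  by (simp add: linear_sum linear_scale)

lemma D_apply:
  fixes g :: "'a::euclidean_space \<Rightarrow> 'b::real_inner"
  assumes sm: "smooth_on U g" and U: "open U" and x: "x \<in> U"
    and a: "(a has_derivative a') (at x)"
  shows "((\<lambda>z. df g z (a z)) has_derivative (\<lambda>h. dd g [h, a x] x + df g x (a' h))) (at x)"
proof -
  have eq: "df g z (a z) = (\<Sum>i\<in>Basis. (a z \<bullet> i) *\<^sub>R dd g [i] z)" if "z \<in> U" for z
  proof -
    have l: "linear (df g z)" using smooth_lin[OF sm that] .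
    have "df g z (a z) = df g z (\<Sum>i\<in>Basis. (a z \<bullet> i) *\<^sub>R i)" by (simp add: euclidean_representation)
    also have "\<dots> = (\<Sum>i\<in>Basis. (a z \<bullet> i) *\<^sub>R df g z i)" using l by (simp add: linear_sum linear_scale)
    finally show ?thesis by simp
  qed
  have di: "((\<lambda>z. (a z \<bullet> i) *\<^sub>R dd g [i] z) has_derivative
      (\<lambda>h. (a x \<bullet> i) *\<^sub>R df (dd g [i]) x h + (a' h \<bullet> i) *\<^sub>R dd g [i] x)) (at x)" for i
    using has_derivative_scaleR[OF has_derivative_inner_left[OF a, of i] smooth_hasd[OF sm x, of "[i]"]] .
  have d: "((\<lambda>z. \<Sum>i\<in>Basis. (a z \<bullet> i) *\<^sub>R dd g [i] z) has_derivative
      (\<lambda>h. \<Sum>i\<in>Basis. (a x \<bullet> i) *\<^sub>R df (dd g [i]) x h + (a' h \<bullet> i) *\<^sub>R dd g [i] x)) (at x)"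
    by (rule has_derivative_sum) (rule di)
  have l1: "linear (df g x)" using smooth_lin[OF sm x] .
  have l2: "linear (\<lambda>b. dd g [h,b] x)" for h using dd2_lin[OF sm U x] .
  have "(\<lambda>h. \<Sum>i\<in>Basis. (a x \<bullet> i) *\<^sub>R df (dd g [i]) x h + (a' h \<bullet> i) *\<^sub>R dd g [i] x)
      = (\<lambda>h. dd g [h, a x] x + df g x (a' h))"
  proof
    fix h
    have "dd g [h, a x] x = dd g [h, \<Sum>i\<in>Basis. (a x \<bullet> i) *\<^sub>R i] x" by (simp add: euclidean_representation)
    also have "\<dots> = (\<Sum>i\<in>Basis. (a x \<bullet> i) *\<^sub>R dd g [h, i] x)"
      by (rule lin_expand[OF l2[of h]])
    finally have e1: "dd g [h, a x] x = (\<Sum>i\<in>Basis. (a x \<bullet> i) *\<^sub>R df (dd g [i]) x h)" by simp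
    have "df g x (a' h) = df g x (\<Sum>i\<in>Basis. (a' h \<bullet> i) *\<^sub>R i)" by (simp add: euclidean_representation)
    also have "\<dots> = (\<Sum>i\<in>Basis. (a' h \<bullet> i) *\<^sub>R dd g [i] x)" using l1 by (simp add: linear_sum linear_scale)
    finally have e2: "df g x (a' h) = (\<Sum>i\<in>Basis. (a' h \<bullet> i) *\<^sub>R dd g [i] x)" .
    show "(\<Sum>i\<in>Basis. (a x \<bullet> i) *\<^sub>R df (dd g [i]) x h + (a' h \<bullet> i) *\<^sub>R dd g [i] x)
      = dd g [h, a x] x + df g x (a' h)" unfolding e1 e2 by (simp add: sum.distrib)
  qed
  with d have "((\<lambda>z. \<Sum>i\<in>Basis. (a z \<bullet> i) *\<^sub>R dd g [i] z) has_derivative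
      (\<lambda>h. dd g [h, a x] x + df g x (a' h))) (at x)" by simp
  then show ?thesis
    by (rule has_derivative_transform_within_open[OF _ U x]) (simp add: eq)
qed

definition gramm :: "(real^'n \<Rightarrow> real^'m) \<Rightarrow> real^'n^'n" where
  "gramm A = (\<chi> i j. inner (A (axis i 1)) (A (axis j 1)))"

definition gsol :: "(real^'n \<Rightarrow> real^'m) \<Rightarrow> real^'n \<Rightarrow> real^'n" where
  "gsol A b = (\<chi> k. det (\<chi> i j. if j = k then b $ i else gramm A $ i $ j) / det (gramm A))"

lemma vec_expand: "(x::real^'n) = (\<Sum>j\<in>UNIV. (x $ j) *\<^sub>R axis j 1)"
  using basis_expansion[of x] by (simp add: scalar_mult_eq_scaleR)

lemma lin_vexpand:
  fixes A :: "real^'n \<Rightarrow> 'b::real_vector"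
  shows "linear A \<Longrightarrow> A x = (\<Sum>j\<in>UNIV. (x $ j) *\<^sub>R A (axis j 1))"
  by (subst vec_expand) (simp add: linear_sum linear_scale)

lemma gram_mult:
  fixes A :: "real^'n \<Rightarrow> real^'m"
  assumes "linear A"
  shows "(gramm A *v a) $ i = inner (A (axis i 1)) (A a)"
proof -
  have "inner (A (axis i 1)) (A a) = inner (A (axis i 1)) (\<Sum>j\<in>UNIV. (a $ j) *\<^sub>R A (axis j 1))"
    using lin_vexpand[OF assms, of a] by simp
  also have "\<dots> = (\<Sum>j\<in>UNIV. inner (A (axis i 1)) (A (axis j 1)) * a $ j)"
    by (simp add: inner_sum_right mult.commute)
  finally show ?thesis by (simp add: matrix_vector_mult_def gramm_def)
qed

lemma gram_det:
  fixes A :: "real^'n \<Rightarrow> real^'m"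
  assumes l: "linear A" and i: "inj A"
  shows "det (gramm A) \<noteq> 0"
proof -
  have "\<forall>a. gramm A *v a = 0 \<longrightarrow> a = 0"
  proof (intro allI impI)
    fix a assume h: "gramm A *v a = 0"
    have "inner (A a) (A a) = inner (\<Sum>j\<in>UNIV. (a $ j) *\<^sub>R A (axis j 1)) (A a)"
      using lin_vexpand[OF l, of a] by simp
    also have "\<dots> = (\<Sum>j\<in>UNIV. a $ j * (gramm A *v a) $ j)"
      by (simp add: inner_sum_left gram_mult[OF l])
    also have "\<dots> = 0" using h by simp
    finally have "A a = 0" by simp
    then show "a = 0" using i l by (metis linear_0 injD)
  qed
  then have "\<exists>B. B ** gramm A = mat 1" using matrix_left_invertible_ker by blast
  then show ?thesis using invertible_left_inverse invertible_det_nz by blast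
qed

lemma gsol_spec:
  fixes A :: "real^'n \<Rightarrow> real^'m"
  assumes l: "linear A" and i: "inj A"
  shows "(\<forall>k. inner (A (axis k 1)) (A a) = b $ k) \<longleftrightarrow> a = gsol A b"
proof -
  have "(\<forall>k. inner (A (axis k 1)) (A a) = b $ k) \<longleftrightarrow> gramm A *v a = b"
    by (simp add: vec_eq_iff gram_mult[OF l])
  also have "\<dots> \<longleftrightarrow> a = gsol A b" unfolding gsol_def by (rule cramer[OF gram_det[OF l i]])
  finally show ?thesis .
qed

lemma gsol_diff:
  fixes F :: "real^'n \<Rightarrow> real^'n \<Rightarrow> real^'m" and b :: "real^'n \<Rightarrow> real^'n"
  assumes dF: "\<And>i j. (\<lambda>z. inner (F z (axis i 1)) (F z (axis j 1))) differentiable (at x)"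
    and db: "\<And>i. (\<lambda>z. b z $ i) differentiable (at x)"
    and l: "linear (F x)" and i: "inj (F x)"
  shows "(\<lambda>z. gsol (F z) (b z)) differentiable (at x)"
proof -
  have e: "gsol (F z) (b z) = (\<Sum>k\<in>UNIV. (det (\<chi> i j. if j = k then b z $ i else gramm (F z) $ i $ j) / det (gramm (F z))) *\<^sub>R axis k 1)" for z
    by (subst vec_expand) (simp add: gsol_def)
  have dg: "(\<lambda>z. det (gramm (F z))) differentiable (at x)"
    by (rule det_diff) (simp add: gramm_def dF)
  have dk: "(\<lambda>z. det (\<chi> i j. if j = k then b z $ i else gramm (F z) $ i $ j)) differentiable (at x)" for k
  proof (rule det_diff)
    fix i j show "(\<lambda>z. (\<chi> i j. if j = k then b z $ i else gramm (F z) $ i $ j) $ i $ j) differentiable (at x)"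
      by (cases "j = k") (simp_all add: gramm_def dF db)
  qed
  show ?thesis unfolding e
    by (intro differentiable_sum ballI differentiable_scaleR differentiable_const differentiable_divide dk dg
          gram_det[OF l i]) simp
qed

lemmas isimps = inner_add_left inner_add_right inner_diff_left inner_diff_right inner_minus_left inner_minus_right

lemma dd_const:
  fixes c :: "'b::real_normed_vector" and vs :: "'a::real_normed_vector list"
  shows "\<exists>k. dd (\<lambda>_::'a. c) vs = (\<lambda>_. k)"
proof (induction vs)
  case Nil then show ?case by auto
next
  case (Cons v vs)
  then obtain k where k: "dd (\<lambda>_. c) vs = (\<lambda>_. k)" by blast
  have "df (\<lambda>_::'a. k) z = (\<lambda>_. 0)" for z
    unfolding df_def by (rule frechet_derivative_at[symmetric]) (rule has_derivative_const)
  then show ?case using k by auto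
qed

lemma smooth_const:
  fixes c :: "'b::real_normed_vector" and U :: "'a::real_normed_vector set"
  shows "smooth_on U (\<lambda>_. c)"
  unfolding smooth_on_def
proof
  fix vs :: "'a list"
  obtain k where "dd (\<lambda>_::'a. c) vs = (\<lambda>_. k)" using dd_const by blast
  then show "(\<forall>x\<in>U. dd (\<lambda>_. c) vs differentiable at x) \<and> continuous_on U (dd (\<lambda>_. c) vs)" by simp
qed

lemma proj_eq:
  fixes S :: "'a::real_inner set"
  assumes "w \<in> S" "\<And>s. s \<in> S \<Longrightarrow> inner (u - w) s = 0" "\<And>a b. a \<in> S \<Longrightarrow> b \<in> S \<Longrightarrow> a - b \<in> S"
  shows "proj S u = w"
  unfolding proj_def
proof (rule the_equality)
  show "w \<in> S \<and> (\<forall>s\<in>S. inner (u - w) s = 0)" using assms by auto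
  fix w' assume h: "w' \<in> S \<and> (\<forall>s\<in>S. inner (u - w') s = 0)"
  have d: "w' - w \<in> S" using h assms by auto
  have "inner (w' - w) (w' - w) = inner (u - w) (w' - w) - inner (u - w') (w' - w)"
    by (simp add: isimps)
  also have "\<dots> = 0" using d h assms(2) by auto
  finally show "w' = w" by simp
qed

lemma lin_zero:
  fixes \<phi> :: "real^'n \<Rightarrow> real"
  assumes "linear \<phi>" "\<And>k. \<phi> (axis k 1) = 0"
  shows "\<phi> v = 0"
  using lin_vexpand[OF assms(1), of v] assms(2) by simp

lemma tang_proj:
  fixes F :: "real^'n \<Rightarrow> real^'m"
  assumes l: "linear F" and i: "inj F"
  shows "\<And>b. inner (u - F (gsol F (\<chi> i. inner (F (axis i 1)) u))) (F b) = 0"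
proof -
  fix b
  define a where "a = gsol F (\<chi> i. inner (F (axis i 1)) u)"
  have k: "\<forall>k. inner (F (axis k 1)) (F a) = (\<chi> i. inner (F (axis i 1)) u) $ k"
    using gsol_spec[OF l i] unfolding a_def by blast
  have "linear (\<lambda>b. inner (u - F a) (F b))"
    by (rule linearI) (simp_all add: linear_add[OF l] linear_scale[OF l] isimps)
  moreover have "inner (u - F a) (F (axis k 1)) = 0" for k using k by (simp add: isimps inner_commute)
  ultimately show "inner (u - F a) (F b) = 0" by (rule lin_zero)
qed

lemma tang_proj_eq:
  assumes l: "linear (df f z)" and i: "inj (df f z)"
  shows "proj (tang f z) u = df f z (gsol (df f z) (\<chi> i. inner (df f z (axis i 1)) u))"
proof (rule proj_eq)
  show "df f z (gsol (df f z) (\<chi> i. inner (df f z (axis i 1)) u)) \<in> tang f z" unfolding tang_def by simp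
  show "inner (u - df f z (gsol (df f z) (\<chi> i. inner (df f z (axis i 1)) u))) s = 0" if "s \<in> tang f z" for s
    using that tang_proj[OF l i] unfolding tang_def by auto
  show "a - b \<in> tang f z" if "a \<in> tang f z" "b \<in> tang f z" for a b
    using that l unfolding tang_def by (auto simp: linear_diff[symmetric])
qed

lemma nor_proj:
  assumes l: "linear (df f z)" and i: "inj (df f z)" and w: "w \<in> nor f z"
  shows "inner (proj (nor f z) u) w = inner u w"
proof -
  define p where "p = df f z (gsol (df f z) (\<chi> i. inner (df f z (axis i 1)) u))"
  have "proj (nor f z) u = u - p"
  proof (rule proj_eq)
    show "u - p \<in> nor f z" unfolding nor_def tang_def p_def using tang_proj[OF l i] by auto
    show "inner (u - (u - p)) s = 0" if "s \<in> nor f z" for s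
      using that unfolding nor_def tang_def p_def by (simp add: inner_commute)
    show "a - b \<in> nor f z" if "a \<in> nor f z" "b \<in> nor f z" for a b
      using that unfolding nor_def by (simp add: isimps)
  qed
  moreover have "inner p w = 0" using w unfolding nor_def tang_def p_def by (simp add: inner_commute)
  ultimately show ?thesis by (simp add: isimps)
qed

lemma nor_inner: "w \<in> nor f z \<Longrightarrow> inner w (df f z a) = 0"
  unfolding nor_def tang_def by auto

lemma Yfld_prop:
  assumes l: "linear (df f z)" and i: "inj (df f z)" and lt: "linear (df \<tau> z)"
  shows "Yfld f \<tau> \<eta> z = gsol (df f z) (\<chi> i. - inner (df \<tau> z (axis i 1)) (\<eta> z))"
    and "\<And>a. inner (df f z a) (df f z (Yfld f \<tau> \<eta> z)) = - inner (df \<tau> z a) (\<eta> z)"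
proof -
  define y where "y = gsol (df f z) (\<chi> i. - inner (df \<tau> z (axis i 1)) (\<eta> z))"
  have iff: "(\<forall>v. inner (df f z a) (df f z v) + inner (df \<tau> z v) (\<eta> z) = 0) \<longleftrightarrow> a = y" for a
  proof
    assume h: "\<forall>v. inner (df f z a) (df f z v) + inner (df \<tau> z v) (\<eta> z) = 0"
    have "\<forall>k. inner (df f z (axis k 1)) (df f z a) = (\<chi> i. - inner (df \<tau> z (axis i 1)) (\<eta> z)) $ k"
    proof
      fix k
      have h1: "inner (df f z a) (df f z (axis k 1)) + inner (df \<tau> z (axis k 1)) (\<eta> z) = 0"
        using spec[OF h, of "axis k 1"] .
      have h2: "(\<chi> i. - inner (df \<tau> z (axis i 1)) (\<eta> z)) $ k = - inner (df \<tau> z (axis k 1)) (\<eta> z)"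
        by (rule vec_lambda_beta)
      have h3: "inner (df f z (axis k 1)) (df f z a) = inner (df f z a) (df f z (axis k 1))"
        by (rule inner_commute)
      show "inner (df f z (axis k 1)) (df f z a) = (\<chi> i. - inner (df \<tau> z (axis i 1)) (\<eta> z)) $ k"
        using h1 h2 h3 by linarith
    qed
    then show "a = y" using gsol_spec[OF l i] unfolding y_def by blast
  next
    assume a: "a = y"
    have k: "\<forall>k. inner (df f z (axis k 1)) (df f z y) = (\<chi> i. - inner (df \<tau> z (axis i 1)) (\<eta> z)) $ k"
      using gsol_spec[OF l i] unfolding y_def by blast
    show "\<forall>v. inner (df f z a) (df f z v) + inner (df \<tau> z v) (\<eta> z) = 0"
    proof
      fix v
      have "linear (\<lambda>v. inner (df f z a) (df f z v) + inner (df \<tau> z v) (\<eta> z))"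
        by (rule linearI) (simp_all add: linear_add[OF l] linear_scale[OF l] linear_add[OF lt] linear_scale[OF lt] isimps algebra_simps)
      moreover have "inner (df f z a) (df f z (axis k 1)) + inner (df \<tau> z (axis k 1)) (\<eta> z) = 0" for k
        using k a by (simp add: inner_commute)
      ultimately show "inner (df f z a) (df f z v) + inner (df \<tau> z v) (\<eta> z) = 0" by (rule lin_zero)
    qed
  qed
  show Y: "Yfld f \<tau> \<eta> z = y" unfolding Yfld_def
    by (rule the_equality) (use iff in blast)+
  show "inner (df f z a) (df f z (Yfld f \<tau> \<eta> z)) = - inner (df \<tau> z a) (\<eta> z)" for a
  proof -
    have "inner (df f z y) (df f z a) + inner (df \<tau> z a) (\<eta> z) = 0" using iff[of y] by blast
    then show ?thesis using Y by (simp add: inner_commute eq_neg_iff_add_eq_0)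
  qed
qed

lemma deriv_zero:
  assumes U: "open U" and x: "x \<in> U" and c: "\<And>z. z \<in> U \<Longrightarrow> \<phi> z = k"
    and d: "(\<phi> has_derivative \<phi>') (at x)"
  shows "\<phi>' h = 0"
proof -
  have "(\<phi> has_derivative (\<lambda>_. 0)) (at x)"
    by (rule has_derivative_transform_within_open[OF has_derivative_const U x]) (simp add: c)
  then have "\<phi>' = (\<lambda>_. 0)" using d has_derivative_unique by blast
  then show ?thesis by simp
qed

lemma S_zero:
  fixes f \<tau> :: "real^'n \<Rightarrow> real^'m"
  assumes sf: "smooth_on U f" and st: "smooth_on U \<tau>" and U: "open U" and x: "x \<in> U"
    and bend: "\<And>z v. z \<in> U \<Longrightarrow> inner (df f z v) (df \<tau> z v) = 0"
  shows "inner (dd f [p,q] x) (df \<tau> x b) + inner (df f x b) (dd \<tau> [p,q] x) = 0"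
proof -
  define S where "S p q b = inner (dd f [p,q] x) (df \<tau> x b) + inner (df f x b) (dd \<tau> [p,q] x)" for p q b
  have R1: "S p a a' + S p a' a = 0" for p a a'
  proof -
    define \<phi> where "\<phi> z = inner (dd f [a] z) (dd \<tau> [a'] z) + inner (dd f [a'] z) (dd \<tau> [a] z)" for z
    have z: "\<phi> z = 0" if "z \<in> U" for z
    proof -
      have lf: "linear (df f z)" and lt: "linear (df \<tau> z)" using smooth_lin sf st that by blast+
      have "inner (df f z (a + a')) (df \<tau> z (a + a')) = 0" using bend that by blast
      moreover have "inner (df f z a) (df \<tau> z a) = 0" "inner (df f z a') (df \<tau> z a') = 0" using bend that by blast+
      ultimately show ?thesis unfolding \<phi>_def
        by (simp add: linear_add[OF lf] linear_add[OF lt] isimps)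
    qed
    have d: "(\<phi> has_derivative (\<lambda>h. (inner (dd f [a] x) (df (dd \<tau> [a']) x h) + inner (df (dd f [a]) x h) (dd \<tau> [a'] x))
         + (inner (dd f [a'] x) (df (dd \<tau> [a]) x h) + inner (df (dd f [a']) x h) (dd \<tau> [a] x)))) (at x)"
      unfolding \<phi>_def
      by (intro has_derivative_add has_derivative_inner smooth_hasd[OF sf x] smooth_hasd[OF st x])
    have "(inner (dd f [a] x) (df (dd \<tau> [a']) x p) + inner (df (dd f [a]) x p) (dd \<tau> [a'] x))
         + (inner (dd f [a'] x) (df (dd \<tau> [a]) x p) + inner (df (dd f [a']) x p) (dd \<tau> [a] x)) = 0"
      by (rule deriv_zero[OF U x z d])
    then show ?thesis unfolding S_def by (simp add: inner_commute algebra_simps)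
  qed
  have sym: "S p q b = S q p b" for p q b
    unfolding S_def using schwarz[OF sf U x, of p q] schwarz[OF st U x, of p q] by simp
  have "S p q b = - S p b q" using R1[of p q b] by simp
  also have "\<dots> = - S b p q" using sym by simp
  also have "\<dots> = S b q p" using R1[of b p q] by simp
  also have "\<dots> = S q b p" using sym by simp
  also have "\<dots> = - S q p b" using R1[of q b p] by simp
  also have "\<dots> = - S p q b" using sym by simp
  finally show ?thesis unfolding S_def by simp
qed

lemma inj_the:
  assumes "inj A" shows "(THE w. A w = A a) = a"
  using assms by (auto intro!: the_equality dest: injD)

lemma star_at:
  fixes f \<tau> \<eta> \<xi> :: "real^'n \<Rightarrow> real^'m"
  assumes star: "cond_star U f \<tau> \<eta> \<xi>" and x: "x \<in> U"
    and lF: "linear (df f x)" and iF: "inj (df f x)" and lT: "linear (df \<tau> x)"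
    and en: "\<eta> x \<in> nor f x" and xR: "\<xi> x \<in> Rsp f \<eta> x"
  shows "inner (dd \<tau> [v,b] x) (\<eta> x) + inner (dd f [v,b] x) (df f x (Yfld f \<tau> \<eta> x) + \<xi> x) = 0"
proof -
  have vf: "vector_field U (\<lambda>_. v)" "vector_field U (\<lambda>_. b)" unfolding vector_field_def by (rule smooth_const)+
  have s0: "inner (beta f \<tau> (\<lambda>_. v) (\<lambda>_. b) x) (\<eta> x) + inner (sff f (\<lambda>_. v) (\<lambda>_. b) x) (\<xi> x) = 0"
    using star vf x unfolding cond_star_def by blast
  define u where "u = dd f [v,b] x"
  have nab: "nablat (\<lambda>_. v) (push f (\<lambda>_. b)) x = u" unfolding u_def nablat_def push_def by simp
  have nabT: "nablat (\<lambda>_. v) (Lop \<tau> (\<lambda>_. b)) x = dd \<tau> [v,b] x" unfolding nablat_def Lop_def by simp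
  have xn: "\<xi> x \<in> nor f x" using xR unfolding Rsp_def by simp
  have xe: "inner (\<xi> x) (\<eta> x) = 0" using xR unfolding Rsp_def by simp
  have sf: "inner (sff f (\<lambda>_. v) (\<lambda>_. b) x) (\<xi> x) = inner u (\<xi> x)"
    unfolding sff_def nab using nor_proj[OF lF iF xn] .
  define ell where "ell = gsol (df f x) (\<chi> i. inner (df f x (axis i 1)) u)"
  have lc: "lc f (\<lambda>_. v) (\<lambda>_. b) x = ell"
    unfolding lc_def nab tang_proj_eq[OF lF iF] ell_def[symmetric] by (rule inj_the[OF iF])
  have bt: "Bt f \<tau> (\<lambda>_. v) (\<lambda>_. b) x = dd \<tau> [v,b] x - df \<tau> x ell"
    unfolding Bt_def nabT lc by (simp add: Lop_def nablat_def lc)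
  have be: "inner (beta f \<tau> (\<lambda>_. v) (\<lambda>_. b) x) (\<eta> x) = inner (dd \<tau> [v,b] x) (\<eta> x) - inner (df \<tau> x ell) (\<eta> x)"
    unfolding beta_def nor_proj[OF lF iF en] bt by (simp add: isimps)
  have y: "inner (df f x ell) (df f x (Yfld f \<tau> \<eta> x)) = - inner (df \<tau> x ell) (\<eta> x)"
    using Yfld_prop(2)[OF lF iF lT] .
  have t: "inner (u - df f x ell) (df f x (Yfld f \<tau> \<eta> x)) = 0" unfolding ell_def by (rule tang_proj[OF lF iF])
  show ?thesis using s0 sf be y t unfolding u_def by (simp add: isimps)
qed

lemma Lbar_TP:
  fixes f \<tau> \<eta> \<xi> :: "real^'n \<Rightarrow> real^'m"
  assumes lF: "linear (df f z)" and iF: "inj (df f z)" and en: "\<eta> z \<in> nor f z" and e1: "inner (\<eta> z) (\<eta> z) = 1"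
  shows "Lbar f \<tau> \<eta> \<xi> z (df f z a + t *\<^sub>R \<eta> z) = df \<tau> z a + t *\<^sub>R (df f z (Yfld f \<tau> \<eta> z) + \<xi> z)"
proof -
  have p: "proj (tang f z) (df f z a + t *\<^sub>R \<eta> z) = df f z a"
  proof (rule proj_eq)
    show "df f z a \<in> tang f z" unfolding tang_def by simp
    show "inner (df f z a + t *\<^sub>R \<eta> z - df f z a) s = 0" if "s \<in> tang f z" for s
      using en that unfolding nor_def by simp
    show "p - q \<in> tang f z" if "p \<in> tang f z" "q \<in> tang f z" for p q
      using that lF unfolding tang_def by (auto simp: linear_diff[symmetric])
  qed
  have i: "inner (df f z a + t *\<^sub>R \<eta> z) (\<eta> z) = t"
    using nor_inner[OF en, of a] e1 by (simp add: isimps inner_commute)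
  show ?thesis unfolding Lbar_def p inj_the[OF iF] i ..
qed

lemma alg:
  fixes Fv Fao FVo Tv Tao TVo FY FYo F1Y F1b T1b P Q e x eo xo lamo Wo r :: "'a::real_inner" and c co tq :: real
  assumes lam1_def: "lamo = P + FVo + co *\<^sub>R e + c *\<^sub>R eo"
    and W1_def: "Wo = Q + TVo + co *\<^sub>R (FY + x) + c *\<^sub>R (F1Y + FYo + xo)"
    and t1_def: "tq = inner lamo e"
    and r_def: "r = lamo - Fao - tq *\<^sub>R e"
    and a1: "inner (Fv + Fao) (Tao - TVo) = - inner (Fao - FVo) (Tv + Tao)"
    and a2: "inner (Fv + Fao) (Tv + Tao) = 0"
    and be: "inner e Fv = 0" "inner e Fao = 0" "inner e FVo = 0" "inner e FY = 0" "inner e FYo = 0" "inner e e = 1"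
    and bx: "inner x Fv = 0" "inner x Fao = 0" "inner x FVo = 0" "inner x FY = 0" "inner x FYo = 0" "inner x e = 0"
    and co: "inner (Fv + Fao) FY = - inner (Tv + Tao) e"
    and c2: "inner (Fao - FVo) FY = - inner (Tao - TVo) e"
    and d: "inner (Fv + Fao) Q + inner P (Tv + Tao) = 0"
    and eo: "inner T1b e + inner F1b (FY + x) = 0"
    and e2: "inner Q e + inner P (FY + x) = 0"
    and f1: "inner xo (Fv + Fao) + inner x F1b = 0"
    and f2: "inner eo FY + inner e F1Y = 0"
    and f3: "inner eo e = 0"
    and f4: "inner xo e + inner x eo = 0"
    and g: "inner F1b FY + inner (Fv + Fao) F1Y + inner (Fv + Fao) FYo + inner T1b e + inner (Tv + Tao) eo = 0"
    and h: "inner Fao FY = inner lamo FY"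
  shows "inner (Fv + lamo) (Tv + Wo) = inner r (Wo - (Tao + tq *\<^sub>R (FY + x)))"
proof -
  define k where "k = inner P e"
  have tq: "tq = k + co" unfolding t1_def lam1_def k_def using be f3
    by (simp add: isimps inner_commute algebra_simps)
  define Fb where "Fb = Fv + Fao"
  define Tb where "Tb = Tv + Tao"
  define Fp where "Fp = Fao - FVo"
  define Tp where "Tp = Tao - TVo"
  define s where "s = tq"
  define w where "w = Fb + s *\<^sub>R e"
  define D where "D = Q - Tp - k *\<^sub>R (FY + x) + c *\<^sub>R (F1Y + FYo + xo)"
  have r_eq: "r = P + c *\<^sub>R eo - Fp - k *\<^sub>R e"
    unfolding r_def lam1_def Fp_def tq by (simp add: algebra_simps)
  have W_eq: "Tv + Wo = (Tb + s *\<^sub>R (FY + x)) + D"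
    unfolding W1_def D_def Tb_def Tp_def s_def tq by (simp add: algebra_simps)
  have L_eq: "Fv + lamo = w + r"
    unfolding w_def r_def Fb_def s_def by (simp add: algebra_simps)
  have R_eq: "Wo - (Tao + tq *\<^sub>R (FY + x)) = D"
    using W_eq unfolding Tb_def s_def by (simp add: algebra_simps)
  have FpFY: "inner Fp FY = inner P FY + c * inner eo FY"
    using h be unfolding Fp_def lam1_def by (simp add: isimps inner_commute algebra_simps)
  have fb1: "inner Fb Tb = 0" using a2 unfolding Fb_def Tb_def .
  have fb2: "inner Fb FY + inner e Tb = 0" using co unfolding Fb_def Tb_def by (simp add: inner_commute)
  have fb3: "inner Fb x = 0" "inner e FY = 0" "inner e x = 0" "inner e Fb = 0"
    using bx be unfolding Fb_def by (simp_all add: isimps inner_commute)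
  have "inner w (Tb + s *\<^sub>R (FY + x)) = inner Fb Tb + s * (inner Fb FY + inner e Tb) + s * inner Fb x + s * s * (inner e FY + inner e x)"
    unfolding w_def by (simp add: isimps inner_commute algebra_simps)
  then have i: "inner w (Tb + s *\<^sub>R (FY + x)) = 0" using fb1 fb2 fb3 by simp
  have "inner r FY = inner P FY + c * inner eo FY - inner Fp FY - k * inner e FY"
    unfolding r_eq by (simp add: isimps inner_commute algebra_simps)
  then have ii: "inner r FY = 0" using FpFY fb3 by simp
  have fa1: "inner Fb Tp + inner Fp Tb = 0" using a1 unfolding Fb_def Tb_def Fp_def Tp_def by simp
  have fd: "inner Fb Q + inner P Tb = 0" using d unfolding Fb_def Tb_def .
  have A: "inner Fb Q - inner Fb Tp - k * inner Fb FY - k * inner Fb x + inner P Tb - inner Fp Tb - k * inner e Tb = 0"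
  proof -
    have "inner Fb Q - inner Fb Tp - k * inner Fb FY - k * inner Fb x + inner P Tb - inner Fp Tb - k * inner e Tb
      = (inner Fb Q + inner P Tb) - (inner Fb Tp + inner Fp Tb) - k * (inner Fb FY + inner e Tb) - k * inner Fb x"
      by (simp add: algebra_simps)
    then show ?thesis using fa1 fd fb2 fb3 by simp
  qed
  have B: "inner Fb F1Y + inner Fb FYo + inner Fb xo + inner eo Tb = 0"
  proof -
    have g': "inner F1b FY + inner Fb F1Y + inner Fb FYo + inner T1b e + inner Tb eo = 0" using g unfolding Fb_def Tb_def .
    have f1': "inner xo Fb + inner x F1b = 0" using f1 unfolding Fb_def .
    have eo': "inner T1b e + inner F1b FY + inner F1b x = 0" using eo by (simp add: isimps)
    show ?thesis using g' f1' eo' by (simp add: inner_commute)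
  qed
  have C: "inner e Q - inner e Tp + c * inner e F1Y + c * (inner e xo + inner eo x) + inner P x = 0"
  proof -
    have t: "inner e Tp = - (inner P FY + c * inner eo FY)" using c2 FpFY unfolding Fp_def Tp_def
      by (simp add: inner_commute)
    have "inner e Q - inner e Tp + c * inner e F1Y + c * (inner e xo + inner eo x) + inner P x
       = (inner Q e + inner P (FY + x)) + c * (inner eo FY + inner e F1Y) + c * (inner xo e + inner x eo)"
      unfolding t by (simp add: isimps inner_commute algebra_simps)
    then show ?thesis using e2 f2 f4 by simp
  qed
  have "inner (Fv + lamo) (Tv + Wo) - inner r (Wo - (Tao + tq *\<^sub>R (FY + x)))
      = inner w (Tb + s *\<^sub>R (FY + x)) + s * inner r FY
        + (inner Fb Q - inner Fb Tp - k * inner Fb FY - k * inner Fb x + inner P Tb - inner Fp Tb - k * inner e Tb)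
        + c * (inner Fb F1Y + inner Fb FYo + inner Fb xo + inner eo Tb)
        + s * (inner e Q - inner e Tp + c * inner e F1Y + c * (inner e xo + inner eo x) + inner P x)
        + (c * s * inner FYo e - s * inner Fp x - k * s * inner FY e - 2 * k * s * inner e x)"
    unfolding R_eq L_eq W_eq unfolding w_def D_def r_eq by (simp add: isimps inner_commute algebra_simps)
  moreover have "inner FYo e = 0" "inner Fp x = 0" "inner FY e = 0" "inner e x = 0"
    using be bx unfolding Fp_def by (simp_all add: isimps inner_commute)
  ultimately show ?thesis using i ii A B C by simp
qed

theorem lemma17:
  fixes U :: "(real^'n) set" and f \<tau> \<eta> \<xi> :: "real^'n \<Rightarrow> real^'m"
  assumes p2: "CARD('m) \<ge> CARD('n) + 2"
    and imm: "isometric_immersion U f"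
    and bend: "inf_bending U f \<tau>"
    and star: "cond_star U f \<tau> \<eta> \<xi>"
  shows "\<forall>X lam. vector_field U X \<longrightarrow> smooth_on U lam \<longrightarrow> (\<forall>x\<in>U. lam x \<in> TP f \<eta> x) \<longrightarrow>
     (\<forall>x\<in>U.
        inner (push f X x + nablat X lam x)
              (Lop \<tau> X x + nablat X (\<lambda>z. Lbar f \<tau> \<eta> \<xi> z (lam z)) x)
      = inner (proj (Rsp f \<eta> x) (nablat X lam x))
              (nablat X (\<lambda>z. Lbar f \<tau> \<eta> \<xi> z (lam z)) x
               - Lbar f \<tau> \<eta> \<xi> x (proj (TP f \<eta> x) (nablat X lam x))))"
proof (intro allI impI ballI)
  fix X lam x
  assume vX: "vector_field U X" and sl: "smooth_on U lam" and tpz: "\<forall>x\<in>U. lam x \<in> TP f \<eta> x" and x: "x \<in> U"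
  have U: "open U" and sf: "smooth_on U f" and iF: "\<And>z. z \<in> U \<Longrightarrow> inj (df f z)"
    using imm unfolding isometric_immersion_def by auto
  have st: "smooth_on U \<tau>" and bz: "\<And>z v. z \<in> U \<Longrightarrow> inner (df f z v) (df \<tau> z v) = 0"
    using bend unfolding inf_bending_def by auto
  have se: "smooth_on U \<eta>" and sx: "smooth_on U \<xi>"
    and pts: "\<And>z. z \<in> U \<Longrightarrow> \<eta> z \<in> nor f z \<and> norm (\<eta> z) = 1 \<and> \<xi> z \<in> Rsp f \<eta> z"
    using star unfolding cond_star_def by auto
  have lF: "\<And>z. z \<in> U \<Longrightarrow> linear (df f z)" using smooth_lin[OF sf] by blast
  have lT: "\<And>z. z \<in> U \<Longrightarrow> linear (df \<tau> z)" using smooth_lin[OF st] by blast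
  have en: "\<And>z. z \<in> U \<Longrightarrow> \<eta> z \<in> nor f z" using pts by blast
  have ee: "\<And>z. z \<in> U \<Longrightarrow> inner (\<eta> z) (\<eta> z) = 1"
    using pts by (metis norm_eq_sqrt_inner real_sqrt_eq_1_iff)
  have xR: "\<And>z. z \<in> U \<Longrightarrow> \<xi> z \<in> Rsp f \<eta> z" using pts by blast
  have xn: "\<And>z. z \<in> U \<Longrightarrow> \<xi> z \<in> nor f z" using xR unfolding Rsp_def by blast
  have xe: "\<And>z. z \<in> U \<Longrightarrow> inner (\<xi> z) (\<eta> z) = 0" using xR unfolding Rsp_def by blast

  define Vf where "Vf z = gsol (df f z) (\<chi> i. inner (df f z (axis i 1)) (lam z))" for z
  define cf where "cf z = inner (lam z) (\<eta> z)" for z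
  define Yf where "Yf z = gsol (df f z) (\<chi> i. - inner (df \<tau> z (axis i 1)) (\<eta> z))" for z

  have lamdec: "lam z = df f z (Vf z) + cf z *\<^sub>R \<eta> z" if z: "z \<in> U" for z
  proof -
    obtain a t where at: "lam z = df f z a + t *\<^sub>R \<eta> z" using tpz z unfolding TP_def by blast
    have "cf z = t" unfolding cf_def at using nor_inner[OF en[OF z], of a] ee[OF z]
      by (simp add: isimps inner_commute)
    moreover have "a = Vf z"
    proof -
      have g: "a = gsol (df f z) (\<chi> i. inner (df f z (axis i 1)) (df f z a))"
        using gsol_spec[OF lF[OF z] iF[OF z], of a "\<chi> i. inner (df f z (axis i 1)) (df f z a)"] by simp
      have "(\<chi> i. inner (df f z (axis i 1)) (lam z)) = (\<chi> i. inner (df f z (axis i 1)) (df f z a))"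
        unfolding at using nor_inner[OF en[OF z]] by (simp add: isimps inner_commute)
      then show ?thesis using g unfolding Vf_def by simp
    qed
    ultimately show ?thesis using at by simp
  qed
  have Yeq: "Yfld f \<tau> \<eta> z = Yf z" if "z \<in> U" for z
    unfolding Yf_def using Yfld_prop(1)[OF lF[OF that] iF[OF that] lT[OF that]] .
  have Yprop: "inner (df f z a) (df f z (Yf z)) = - inner (df \<tau> z a) (\<eta> z)" if "z \<in> U" for z a
    using Yfld_prop(2)[OF lF[OF that] iF[OF that] lT[OF that], where \<eta>=\<eta>] Yeq[OF that] by simp
  have Lbar_eq: "Lbar f \<tau> \<eta> \<xi> z (lam z) = df \<tau> z (Vf z) + cf z *\<^sub>R (df f z (Yf z) + \<xi> z)" if z: "z \<in> U" for z
    using Lbar_TP[where \<eta>=\<eta> and \<tau>=\<tau> and \<xi>=\<xi> and a="Vf z" and t="cf z", OF lF[OF z] iF[OF z] en[OF z] ee[OF z]] lamdec[OF z] Yeq[OF z] by simp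

  have dfx: "dd f vs differentiable (at x)" for vs using sf x unfolding smooth_on_def by blast
  have dtx: "dd \<tau> vs differentiable (at x)" for vs using st x unfolding smooth_on_def by blast
  have dex: "\<eta> differentiable (at x)" using se x unfolding smooth_on_def by (metis dd.simps(1))
  have dlx: "lam differentiable (at x)" using sl x unfolding smooth_on_def by (metis dd.simps(1))
  have dVf: "(Vf has_derivative df Vf x) (at x)"
  proof -
    have "(\<lambda>z. gsol (df f z) ((\<lambda>z. \<chi> i. inner (df f z (axis i 1)) (lam z)) z)) differentiable (at x)"
    proof (rule gsol_diff[where F="df f" and b="\<lambda>z. \<chi> i. inner (df f z (axis i 1)) (lam z)", OF _ _ lF[OF x] iF[OF x]])
      show "(\<lambda>z. inner (df f z (axis i 1)) (df f z (axis j 1))) differentiable (at x)" for i j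
        using differentiable_inner[OF dfx[of "[axis i 1]"] dfx[of "[axis j 1]"]] by simp
      show "(\<lambda>z. (\<chi> i. inner (df f z (axis i 1)) (lam z)) $ i) differentiable (at x)" for i
        using differentiable_inner[OF dfx[of "[axis i 1]"] dlx] by simp
    qed
    then show ?thesis unfolding Vf_def df_def by (simp add: frechet_derivative_works)
  qed
  have dYf: "(Yf has_derivative df Yf x) (at x)"
  proof -
    have "(\<lambda>z. gsol (df f z) ((\<lambda>z. \<chi> i. - inner (df \<tau> z (axis i 1)) (\<eta> z)) z)) differentiable (at x)"
    proof (rule gsol_diff[where F="df f" and b="\<lambda>z. \<chi> i. - inner (df \<tau> z (axis i 1)) (\<eta> z)", OF _ _ lF[OF x] iF[OF x]])
      show "(\<lambda>z. inner (df f z (axis i 1)) (df f z (axis j 1))) differentiable (at x)" for i j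
        using differentiable_inner[OF dfx[of "[axis i 1]"] dfx[of "[axis j 1]"]] by simp
      show "(\<lambda>z. (\<chi> i. - inner (df \<tau> z (axis i 1)) (\<eta> z)) $ i) differentiable (at x)" for i
        using differentiable_minus[OF differentiable_inner[OF dtx[of "[axis i 1]"] dex]] by simp
    qed
    then show ?thesis unfolding Yf_def df_def by (simp add: frechet_derivative_works)
  qed
  have dcf: "(cf has_derivative df cf x) (at x)"
  proof -
    have "cf differentiable (at x)" unfolding cf_def using differentiable_inner[OF dlx dex] .
    then show ?thesis unfolding df_def by (simp add: frechet_derivative_works)
  qed
  have hf0: "(f has_derivative df f x) (at x)" using smooth_hasd0[OF sf x] .
  have he: "(\<eta> has_derivative df \<eta> x) (at x)" using smooth_hasd0[OF se x] .
  have hx: "(\<xi> has_derivative df \<xi> x) (at x)" using smooth_hasd0[OF sx x] .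

  define v where "v = X x"
  define V where "V = Vf x"
  define Y where "Y = Yf x"
  define c where "c = cf x"
  define c1 where "c1 = df cf x v"
  define V1 where "V1 = df Vf x v"
  define Y1 where "Y1 = df Yf x v"
  define e1 where "e1 = df \<eta> x v"
  define x1 where "x1 = df \<xi> x v"
  define F where "F = df f x"
  define T where "T = df \<tau> x"

  have hl: "((\<lambda>z. df f z (Vf z) + cf z *\<^sub>R \<eta> z) has_derivative
      (\<lambda>h. (dd f [h, Vf x] x + df f x (df Vf x h)) + (cf x *\<^sub>R df \<eta> x h + df cf x h *\<^sub>R \<eta> x))) (at x)"
    by (intro has_derivative_add D_apply[OF sf U x dVf] has_derivative_scaleR dcf he)
  have hl2: "(lam has_derivative
      (\<lambda>h. (dd f [h, Vf x] x + df f x (df Vf x h)) + (cf x *\<^sub>R df \<eta> x h + df cf x h *\<^sub>R \<eta> x))) (at x)"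
    by (rule has_derivative_transform_within_open[OF hl U x]) (simp add: lamdec)
  define lam1 where "lam1 = df lam x v"
  have dl: "df lam x = (\<lambda>h. (dd f [h, Vf x] x + df f x (df Vf x h)) + (cf x *\<^sub>R df \<eta> x h + df cf x h *\<^sub>R \<eta> x))"
    unfolding df_def[of lam] by (rule frechet_derivative_at[OF hl2, symmetric])
  have lam1: "lam1 = dd f [v,V] x + F V1 + c1 *\<^sub>R \<eta> x + c *\<^sub>R e1"
    unfolding lam1_def dl V_def F_def V1_def c1_def c_def e1_def by (simp add: algebra_simps)
  define W where "W z = Lbar f \<tau> \<eta> \<xi> z (lam z)" for z
  have hw: "((\<lambda>z. df \<tau> z (Vf z) + cf z *\<^sub>R (df f z (Yf z) + \<xi> z)) has_derivative
      (\<lambda>h. (dd \<tau> [h, Vf x] x + df \<tau> x (df Vf x h)) +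
           (cf x *\<^sub>R ((dd f [h, Yf x] x + df f x (df Yf x h)) + df \<xi> x h) + df cf x h *\<^sub>R (df f x (Yf x) + \<xi> x)))) (at x)"
    by (intro has_derivative_add D_apply[OF st U x dVf] D_apply[OF sf U x dYf] has_derivative_scaleR dcf hx)
  have hw2: "(W has_derivative
      (\<lambda>h. (dd \<tau> [h, Vf x] x + df \<tau> x (df Vf x h)) +
           (cf x *\<^sub>R ((dd f [h, Yf x] x + df f x (df Yf x h)) + df \<xi> x h) + df cf x h *\<^sub>R (df f x (Yf x) + \<xi> x)))) (at x)"
    by (rule has_derivative_transform_within_open[OF hw U x]) (simp add: W_def Lbar_eq)
  define W1 where "W1 = df W x v"
  have dw: "df W x = (\<lambda>h. (dd \<tau> [h, Vf x] x + df \<tau> x (df Vf x h)) +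
           (cf x *\<^sub>R ((dd f [h, Yf x] x + df f x (df Yf x h)) + df \<xi> x h) + df cf x h *\<^sub>R (df f x (Yf x) + \<xi> x)))"
    unfolding df_def[of W] by (rule frechet_derivative_at[OF hw2, symmetric])
  have W1: "W1 = dd \<tau> [v,V] x + T V1 + c1 *\<^sub>R (F Y + \<xi> x) + c *\<^sub>R (dd f [v,Y] x + F Y1 + x1)"
    unfolding W1_def dw
    unfolding V_def F_def T_def V1_def c1_def c_def Y_def Y1_def x1_def by (simp add: algebra_simps)
  have lFx: "linear F" unfolding F_def using lF[OF x] .
  have iFx: "inj F" unfolding F_def using iF[OF x] .
  have lTx: "linear T" unfolding T_def using lT[OF x] .
  define a1 where "a1 = gsol F (\<chi> i. inner (F (axis i 1)) lam1)"
  define t1 where "t1 = inner lam1 (\<eta> x)"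
  define r where "r = lam1 - F a1 - t1 *\<^sub>R \<eta> x"
  have h: "inner (F a1) (F b) = inner lam1 (F b)" for b
    using tang_proj[OF lFx iFx, of lam1 b] unfolding a1_def by (simp add: isimps)
  have skew: "inner (F a) (T b) = - inner (F b) (T a)" for a b
  proof -
    have "inner (F (a + b)) (T (a + b)) = 0" "inner (F a) (T a) = 0" "inner (F b) (T b) = 0"
      using bz[OF x] unfolding F_def T_def by blast+
    then show ?thesis by (simp add: linear_add[OF lFx] linear_add[OF lTx] isimps)
  qed
  have eF: "inner (\<eta> x) (F a) = 0" for a unfolding F_def using nor_inner[OF en[OF x]] .
  have xF: "inner (\<xi> x) (F a) = 0" for a unfolding F_def using nor_inner[OF xn[OF x]] .
  have eex: "inner (\<eta> x) (\<eta> x) = 1" using ee[OF x] .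
  have xex: "inner (\<xi> x) (\<eta> x) = 0" using xe[OF x] .
  have YpropX: "inner (F a) (F Y) = - inner (T a) (\<eta> x)" for a
    unfolding F_def T_def Y_def using Yprop[OF x] .
  have Sd: "inner (dd f [v,V] x) (T b) + inner (F b) (dd \<tau> [v,V] x) = 0" for b
    unfolding F_def T_def using S_zero[OF sf st U x bz] .
  have stx: "inner (dd \<tau> [v,b] x) (\<eta> x) + inner (dd f [v,b] x) (F Y + \<xi> x) = 0" for b
    using star_at[OF star x lF[OF x] iF[OF x] lT[OF x] en[OF x] xR[OF x]] Yeq[OF x]
    unfolding F_def Y_def by simp
  have fe: "inner e1 (F a) + inner (\<eta> x) (dd f [v,a] x) = 0" for a
  proof -
    have "inner (\<eta> x) (df (dd f [a]) x v) + inner (df \<eta> x v) (dd f [a] x) = 0"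
      by (rule deriv_zero[OF U x _ has_derivative_inner[OF he smooth_hasd[OF sf x, of "[a]"]]])
         (use nor_inner[OF en] in simp)
    then show ?thesis unfolding e1_def F_def by (simp add: add.commute)
  qed
  have fx: "inner x1 (F a) + inner (\<xi> x) (dd f [v,a] x) = 0" for a
  proof -
    have "inner (\<xi> x) (df (dd f [a]) x v) + inner (df \<xi> x v) (dd f [a] x) = 0"
      by (rule deriv_zero[OF U x _ has_derivative_inner[OF hx smooth_hasd[OF sf x, of "[a]"]]])
         (use nor_inner[OF xn] in simp)
    then show ?thesis unfolding x1_def F_def by (simp add: add.commute)
  qed
  have f3: "inner e1 (\<eta> x) = 0"
  proof -
    have "inner (\<eta> x) (df \<eta> x v) + inner (df \<eta> x v) (\<eta> x) = 0"
      by (rule deriv_zero[OF U x _ has_derivative_inner[OF he he]]) (use ee in simp)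
    then show ?thesis unfolding e1_def by (simp add: inner_commute)
  qed
  have f4: "inner x1 (\<eta> x) + inner (\<xi> x) e1 = 0"
  proof -
    have "inner (\<xi> x) (df \<eta> x v) + inner (df \<xi> x v) (\<eta> x) = 0"
      by (rule deriv_zero[OF U x _ has_derivative_inner[OF hx he]]) (use xe in simp)
    then show ?thesis unfolding e1_def x1_def by (simp add: add.commute)
  qed
  have gY: "inner (F a) (dd f [v,Y] x + F Y1) + inner (dd f [v,a] x) (F Y) + (inner (T a) e1 + inner (dd \<tau> [v,a] x) (\<eta> x)) = 0" for a
  proof -
    have "(inner (dd f [a] x) (dd f [v, Yf x] x + df f x (df Yf x v)) + inner (df (dd f [a]) x v) (df f x (Yf x)))
        + (inner (dd \<tau> [a] x) (df \<eta> x v) + inner (df (dd \<tau> [a]) x v) (\<eta> x)) = 0"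
    proof (rule deriv_zero[OF U x _ has_derivative_add[OF
          has_derivative_inner[OF smooth_hasd[OF sf x, of "[a]"] D_apply[OF sf U x dYf]]
          has_derivative_inner[OF smooth_hasd[OF st x, of "[a]"] he]]])
      fix z assume z: "z \<in> U"
      show "inner (dd f [a] z) (df f z (Yf z)) + inner (dd \<tau> [a] z) (\<eta> z) = 0"
        using Yprop[OF z, of a] by simp
    qed
    then show ?thesis unfolding F_def T_def Y_def Y1_def e1_def by simp
  qed
  have core: "inner (F v + lam1) (T v + W1) = inner r (W1 - (T a1 + t1 *\<^sub>R (F Y + \<xi> x)))"
  proof (rule alg[where Fv="F v" and Fao="F a1" and FVo="F V1" and Tv="T v" and Tao="T a1" and TVo="T V1"
        and FY="F Y" and FYo="F Y1" and F1Y="dd f [v,Y] x" and F1b="dd f [v, v + a1] x" and T1b="dd \<tau> [v, v + a1] x"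
        and P="dd f [v,V] x" and Q="dd \<tau> [v,V] x" and e="\<eta> x" and x="\<xi> x" and eo=e1 and xo=x1
        and lamo=lam1 and Wo=W1 and r=r and c=c and co=c1 and tq=t1])
    show "lam1 = dd f [v,V] x + F V1 + c1 *\<^sub>R \<eta> x + c *\<^sub>R e1" by (rule lam1)
    show "W1 = dd \<tau> [v,V] x + T V1 + c1 *\<^sub>R (F Y + \<xi> x) + c *\<^sub>R (dd f [v,Y] x + F Y1 + x1)" by (rule W1)
    show "t1 = inner lam1 (\<eta> x)" by (rule t1_def)
    show "r = lam1 - F a1 - t1 *\<^sub>R \<eta> x" by (rule r_def)
    show "inner (F v + F a1) (T a1 - T V1) = - inner (F a1 - F V1) (T v + T a1)"
      using skew[of "v + a1" "a1 - V1"] by (simp add: linear_add[OF lFx] linear_add[OF lTx] linear_diff[OF lFx] linear_diff[OF lTx])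
    show "inner (F v + F a1) (T v + T a1) = 0"
      using bz[OF x, of "v + a1"] unfolding F_def[symmetric] T_def[symmetric] by (simp add: linear_add[OF lFx] linear_add[OF lTx])
    show "inner (\<eta> x) (F v) = 0" "inner (\<eta> x) (F a1) = 0" "inner (\<eta> x) (F V1) = 0" "inner (\<eta> x) (F Y) = 0"
      "inner (\<eta> x) (F Y1) = 0" "inner (\<eta> x) (\<eta> x) = 1" using eF eex by auto
    show "inner (\<xi> x) (F v) = 0" "inner (\<xi> x) (F a1) = 0" "inner (\<xi> x) (F V1) = 0" "inner (\<xi> x) (F Y) = 0"
      "inner (\<xi> x) (F Y1) = 0" "inner (\<xi> x) (\<eta> x) = 0" using xF xex by auto
    show "inner (F v + F a1) (F Y) = - inner (T v + T a1) (\<eta> x)"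
      using YpropX[of "v + a1"] by (simp add: linear_add[OF lFx] linear_add[OF lTx])
    show "inner (F a1 - F V1) (F Y) = - inner (T a1 - T V1) (\<eta> x)"
      using YpropX[of "a1 - V1"] by (simp add: linear_diff[OF lFx] linear_diff[OF lTx])
    show "inner (F v + F a1) (dd \<tau> [v,V] x) + inner (dd f [v,V] x) (T v + T a1) = 0"
      using Sd[of "v + a1"] by (simp add: linear_add[OF lFx] linear_add[OF lTx])
    show "inner (dd \<tau> [v, v + a1] x) (\<eta> x) + inner (dd f [v, v + a1] x) (F Y + \<xi> x) = 0" by (rule stx)
    show "inner (dd \<tau> [v,V] x) (\<eta> x) + inner (dd f [v,V] x) (F Y + \<xi> x) = 0" by (rule stx)
    show "inner x1 (F v + F a1) + inner (\<xi> x) (dd f [v, v + a1] x) = 0"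
      using fx[of "v + a1"] by (simp add: linear_add[OF lFx])
    show "inner e1 (F Y) + inner (\<eta> x) (dd f [v,Y] x) = 0" by (rule fe)
    show "inner e1 (\<eta> x) = 0" by (rule f3)
    show "inner x1 (\<eta> x) + inner (\<xi> x) e1 = 0" by (rule f4)
    show "inner (dd f [v, v + a1] x) (F Y) + inner (F v + F a1) (dd f [v,Y] x) + inner (F v + F a1) (F Y1)
        + inner (dd \<tau> [v, v + a1] x) (\<eta> x) + inner (T v + T a1) e1 = 0"
      using gY[of "v + a1"] by (simp add: linear_add[OF lFx] linear_add[OF lTx] isimps algebra_simps)
    show "inner (F a1) (F Y) = inner lam1 (F Y)" by (rule h)
  qed
  have rF: "inner r (F b) = 0" for b
    unfolding r_def using h[of b] eF[of b] by (simp add: isimps inner_commute)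
  have re: "inner r (\<eta> x) = 0"
    unfolding r_def t1_def using eF[of a1] eex by (simp add: isimps inner_commute)
  have Rdiff: "p - q \<in> Rsp f \<eta> x" if "p \<in> Rsp f \<eta> x" "q \<in> Rsp f \<eta> x" for p q
    using that unfolding Rsp_def nor_def by (simp add: isimps)
  have projR: "proj (Rsp f \<eta> x) lam1 = r"
  proof (rule proj_eq[OF _ _ Rdiff])
    show "r \<in> Rsp f \<eta> x" unfolding Rsp_def nor_def tang_def using rF re unfolding F_def by auto
    show "inner (lam1 - r) s = 0" if "s \<in> Rsp f \<eta> x" for s
    proof -
      have "inner s (F a1) = 0" "inner s (\<eta> x) = 0"
        using that unfolding Rsp_def F_def by (auto intro: nor_inner)
      then show ?thesis unfolding r_def by (simp add: isimps inner_commute)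
    qed
  qed
  have projT: "proj (TP f \<eta> x) lam1 = F a1 + t1 *\<^sub>R \<eta> x"
  proof (rule proj_eq)
    show "F a1 + t1 *\<^sub>R \<eta> x \<in> TP f \<eta> x" unfolding TP_def F_def by blast
    show "inner (lam1 - (F a1 + t1 *\<^sub>R \<eta> x)) s = 0" if sT: "s \<in> TP f \<eta> x" for s
    proof -
      obtain b t where s: "s = F b + t *\<^sub>R \<eta> x" using sT unfolding TP_def F_def by blast
      have "lam1 - (F a1 + t1 *\<^sub>R \<eta> x) = r" unfolding r_def by simp
      then show ?thesis using rF re unfolding s by (simp add: isimps)
    qed
    show "p - q \<in> TP f \<eta> x" if pT: "p \<in> TP f \<eta> x" and qT: "q \<in> TP f \<eta> x" for p q
    proof -
      obtain b t where p: "p = F b + t *\<^sub>R \<eta> x" using pT unfolding TP_def F_def by blast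
      obtain b' t' where q: "q = F b' + t' *\<^sub>R \<eta> x" using qT unfolding TP_def F_def by blast
      have "p - q = F (b - b') + (t - t') *\<^sub>R \<eta> x"
        unfolding p q by (simp add: linear_diff[OF lFx] algebra_simps)
      then show ?thesis unfolding TP_def F_def by blast
    qed
  qed
  have LbX: "Lbar f \<tau> \<eta> \<xi> x (F a1 + t1 *\<^sub>R \<eta> x) = T a1 + t1 *\<^sub>R (F Y + \<xi> x)"
    using Lbar_TP[where \<eta>=\<eta> and \<tau>=\<tau> and \<xi>=\<xi> and a=a1 and t=t1, OF lF[OF x] iF[OF x] en[OF x] ee[OF x]] Yeq[OF x]
    unfolding F_def T_def Y_def by simp
  have e1': "push f X x = F v" unfolding push_def F_def v_def ..
  have e2': "nablat X lam x = lam1" unfolding nablat_def lam1_def v_def ..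
  have e3': "Lop \<tau> X x = T v" unfolding Lop_def nablat_def T_def v_def ..
  have e4': "nablat X (\<lambda>z. Lbar f \<tau> \<eta> \<xi> z (lam z)) x = W1" unfolding nablat_def W1_def W_def v_def ..
  show "inner (push f X x + nablat X lam x)
              (Lop \<tau> X x + nablat X (\<lambda>z. Lbar f \<tau> \<eta> \<xi> z (lam z)) x)
      = inner (proj (Rsp f \<eta> x) (nablat X lam x))
              (nablat X (\<lambda>z. Lbar f \<tau> \<eta> \<xi> z (lam z)) x
               - Lbar f \<tau> \<eta> \<xi> x (proj (TP f \<eta> x) (nablat X lam x)))"
    unfolding e1' e2' e3' e4' projR projT LbX using core .
qed

end
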